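(* Let $G$ be a finite vertex-transitive bipartite graph. Then $G$ is IS-imprimitive if and only if $G$ is disconnected.
   Context: Graphs are finite and simple; $\alpha(G)$ is the independence number. For $A\subseteq V(G)$, $N_G(A)=\{b: ab\in E(G)\text{ for some }a\in A\}$ and $N_G[A]=N_G(A)\cup A$. A (nonempty) independent set $A$ of $G$ is imprimitive if $|A|<\alpha(G)$ and $\frac{|A|}{|N_G[A]|}=\frac{\alpha(G)}{|V(G)|}$. $G$ is IS-imprimitive (called "imprimitive" in the paper's statement of this lemma) if it has an imprimitive independent set. *)

theory Defs
  imports Complex_Main
begin

definition simple_graph :: "'a set \<Rightarrow> ('a \<Rightarrow> 'a \<Rightarrow> bool) \<Rightarrow> bool" where
  "simple_graph V E \<longleftrightarrow> finite V \<and> (\<forall>x y. E x y \<longrightarrow> x \<in> V \<and> y \<in> V)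
     \<and> (\<forall>x y. E x y \<longrightarrow> E y x) \<and> (\<forall>x. \<not> E x x)"

definition indep_set :: "'a set \<Rightarrow> ('a \<Rightarrow> 'a \<Rightarrow> bool) \<Rightarrow> 'a set \<Rightarrow> bool" where
  "indep_set V E A \<longleftrightarrow> A \<subseteq> V \<and> (\<forall>x\<in>A. \<forall>y\<in>A. \<not> E x y)"

definition indep_number :: "'a set \<Rightarrow> ('a \<Rightarrow> 'a \<Rightarrow> bool) \<Rightarrow> nat" where
  "indep_number V E = Max (card ` {A. indep_set V E A})"

definition nbhd :: "('a \<Rightarrow> 'a \<Rightarrow> bool) \<Rightarrow> 'a set \<Rightarrow> 'a set" where
  "nbhd E A = {b. \<exists>a\<in>A. E a b}"

definition closed_nbhd :: "('a \<Rightarrow> 'a \<Rightarrow> bool) \<Rightarrow> 'a set \<Rightarrow> 'a set" where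
  "closed_nbhd E A = nbhd E A \<union> A"

definition imprimitive_set :: "'a set \<Rightarrow> ('a \<Rightarrow> 'a \<Rightarrow> bool) \<Rightarrow> 'a set \<Rightarrow> bool" where
  "imprimitive_set V E A \<longleftrightarrow> indep_set V E A \<and> A \<noteq> {} \<and> card A < indep_number V E
     \<and> real (card A) / real (card (closed_nbhd E A)) = real (indep_number V E) / real (card V)"

definition IS_imprimitive :: "'a set \<Rightarrow> ('a \<Rightarrow> 'a \<Rightarrow> bool) \<Rightarrow> bool" where
  "IS_imprimitive V E \<longleftrightarrow> (\<exists>A. imprimitive_set V E A)"

definition graph_automorphism :: "'a set \<Rightarrow> ('a \<Rightarrow> 'a \<Rightarrow> bool) \<Rightarrow> ('a \<Rightarrow> 'a) \<Rightarrow> bool" where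
  "graph_automorphism V E f \<longleftrightarrow> bij_betw f V V \<and> (\<forall>x\<in>V. \<forall>y\<in>V. E x y \<longleftrightarrow> E (f x) (f y))"

definition vertex_transitive :: "'a set \<Rightarrow> ('a \<Rightarrow> 'a \<Rightarrow> bool) \<Rightarrow> bool" where
  "vertex_transitive V E \<longleftrightarrow> (\<forall>u\<in>V. \<forall>v\<in>V. \<exists>f. graph_automorphism V E f \<and> f u = v)"

definition bipartite :: "'a set \<Rightarrow> ('a \<Rightarrow> 'a \<Rightarrow> bool) \<Rightarrow> bool" where
  "bipartite V E \<longleftrightarrow> (\<exists>X Y. X \<union> Y = V \<and> X \<inter> Y = {} \<and> indep_set V E X \<and> indep_set V E Y)"

definition connected_graph :: "'a set \<Rightarrow> ('a \<Rightarrow> 'a \<Rightarrow> bool) \<Rightarrow> bool" where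
  "connected_graph V E \<longleftrightarrow> (\<forall>u\<in>V. \<forall>v\<in>V. E\<^sup>*\<^sup>* u v)"

end

theory Submission
  imports Defs
begin

lemma dc:
  assumes fin: "finite S" "finite T" and sym: "\<forall>x y. E x y \<longrightarrow> E y x"
  shows "(\<Sum>s\<in>S. card ({y. E s y} \<inter> T)) = (\<Sum>t\<in>T. card ({y. E t y} \<inter> S))"
proof -
  have 1: "(\<Sum>s\<in>S. card ({y. E s y} \<inter> T)) = card (SIGMA s:S. {y. E s y} \<inter> T)"
    using fin by (simp add: card_SigmaI)
  have 2: "(\<Sum>t\<in>T. card ({y. E t y} \<inter> S)) = card (SIGMA t:T. {y. E t y} \<inter> S)"
    using fin by (simp add: card_SigmaI)
  have 3: "(\<lambda>(a,b). (b,a)) ` (SIGMA s:S. {y. E s y} \<inter> T) = (SIGMA t:T. {y. E t y} \<inter> S)"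
    using sym by (auto simp: image_def)
  have 4: "inj_on (\<lambda>(a,b). (b,a)) (SIGMA s:S. {y. E s y} \<inter> T)"
    by (auto simp: inj_on_def)
  show ?thesis using 1 2 3 4 card_image by metis
qed

lemma key:
  assumes sg: "simple_graph V E" and reg: "\<forall>x\<in>V. card {y. E x y} = d"
    and A: "A \<subseteq> V" "\<forall>x\<in>A. \<forall>y\<in>A. \<not> E x y"
  shows "d * card A \<le> d * card (nbhd E A)"
    and "d * card A = d * card (nbhd E A) \<Longrightarrow> t \<in> nbhd E A \<Longrightarrow> E t y \<Longrightarrow> y \<in> A"
proof -
  have finV: "finite V" and inV: "\<And>x y. E x y \<Longrightarrow> x \<in> V \<and> y \<in> V"
    and sym: "\<forall>x y. E x y \<longrightarrow> E y x" using sg unfolding simple_graph_def by blast+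
  define N where "N = nbhd E A"
  have NV: "N \<subseteq> V" using inV by (auto simp: N_def nbhd_def)
  have finN: "finite N" using NV finV finite_subset by blast
  have finA: "finite A" using A finV finite_subset by blast
  have finnb: "\<And>x. finite {y. E x y}"
    by (rule finite_subset[OF _ finV]) (auto dest: inV)
  have "d * card A = (\<Sum>a\<in>A. card ({y. E a y} \<inter> N))"
  proof -
    have "\<And>a. a \<in> A \<Longrightarrow> {y. E a y} \<inter> N = {y. E a y}" by (auto simp: N_def nbhd_def)
    then have "(\<Sum>a\<in>A. card ({y. E a y} \<inter> N)) = (\<Sum>a\<in>A. d)" using reg A(1) by (intro sum.cong) auto
    then show ?thesis by simp
  qed
  also have "\<dots> = (\<Sum>t\<in>N. card ({y. E t y} \<inter> A))" by (rule dc[OF finA finN sym])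
  finally have eq: "d * card A = (\<Sum>t\<in>N. card ({y. E t y} \<inter> A))" .
  have le: "\<And>t. t \<in> N \<Longrightarrow> card ({y. E t y} \<inter> A) \<le> d"
    using reg NV finnb by (metis card_mono inf_le1 subsetD)
  have "(\<Sum>t\<in>N. card ({y. E t y} \<inter> A)) \<le> (\<Sum>t\<in>N. d)" using le by (rule sum_mono)
  then show "d * card A \<le> d * card (nbhd E A)" using eq by (simp add: N_def mult.commute)
  assume e: "d * card A = d * card (nbhd E A)" and t: "t \<in> nbhd E A" and ety: "E t y"
  have "card ({y. E t y} \<inter> A) = d"
  proof (rule ccontr)
    assume "card ({y. E t y} \<inter> A) \<noteq> d"
    then have "card ({y. E t y} \<inter> A) < d" using le t N_def by force
    then have "(\<Sum>t\<in>N. card ({y. E t y} \<inter> A)) < (\<Sum>t\<in>N. d)"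
      using le t N_def finN by (intro sum_strict_mono_ex1) auto
    then show False using eq e by (simp add: N_def mult.commute)
  qed
  then have "{y. E t y} \<inter> A = {y. E t y}"
    using reg NV t N_def finnb by (intro card_subset_eq) auto
  then show "y \<in> A" using ety by blast
qed

lemma alpha_props:
  assumes fin: "finite V"
  shows "\<And>A. indep_set V E A \<Longrightarrow> card A \<le> indep_number V E"
    and "\<exists>A. indep_set V E A \<and> card A = indep_number V E"
proof -
  have "{A. indep_set V E A} \<subseteq> Pow V" by (auto simp: indep_set_def)
  then have "finite {A. indep_set V E A}" using fin by (meson finite_Pow_iff finite_subset)
  then have f: "finite (card ` {A. indep_set V E A})" by simp
  have ne: "{} \<in> {A. indep_set V E A}" by (simp add: indep_set_def)
  show "card A \<le> indep_number V E" if "indep_set V E A" for A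
  proof -
    have "card A \<in> card ` {A. indep_set V E A}" using that by blast
    then show ?thesis unfolding indep_number_def by (rule Max_ge[OF f])
  qed
  have "card ` {A. indep_set V E A} \<noteq> {}" using ne by blast
  then have "indep_number V E \<in> card ` {A. indep_set V E A}"
    unfolding indep_number_def by (rule Max_in[OF f])
  then show "\<exists>A. indep_set V E A \<and> card A = indep_number V E" by auto
qed

lemma regular:
  assumes sg: "simple_graph V E" and vt: "vertex_transitive V E" and u: "u \<in> V" and v: "v \<in> V"
  shows "card {y. E u y} = card {y. E v y}"
proof -
  have inV: "\<And>x y. E x y \<Longrightarrow> x \<in> V \<and> y \<in> V" using sg unfolding simple_graph_def by blast
  obtain f where f: "graph_automorphism V E f" "f u = v" using vt u v unfolding vertex_transitive_def by blast
  have b: "bij_betw f V V" and e0: "\<forall>x\<in>V. \<forall>y\<in>V. E x y \<longleftrightarrow> E (f x) (f y)"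
    using f(1) unfolding graph_automorphism_def by (rule conjunct1, rule conjunct2)
  have e: "E x y \<longleftrightarrow> E (f x) (f y)" if "x \<in> V" "y \<in> V" for x y
    using e0 that by blast
  have "f ` {y. E u y} = {y. E v y}"
  proof
    show "f ` {y. E u y} \<subseteq> {y. E v y}"
    proof
      fix z assume "z \<in> f ` {y. E u y}"
      then obtain y where y: "E u y" "z = f y" by blast
      then have "y \<in> V" using inV by blast
      then have "E (f u) (f y)" using e[OF u] y(1) by blast
      then show "z \<in> {y. E v y}" using y(2) f(2) by simp
    qed
    show "{y. E v y} \<subseteq> f ` {y. E u y}"
    proof
      fix y assume "y \<in> {y. E v y}"
      then have y: "E v y" "y \<in> V" using inV by auto
      have "f ` V = V" using b by (simp add: bij_betw_def)
      then have "y \<in> f ` V" using y(2) by simp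
      then obtain z where z: "z \<in> V" "f z = y" by (auto elim!: imageE)
      then have "E (f u) (f z)" using y f(2) by simp
      then have "E u z" using e[OF u z(1)] by blast
      then show "y \<in> f ` {y. E u y}" using z by blast
    qed
  qed
  moreover have "inj_on f {y. E u y}"
  proof -
    have "{y. E u y} \<subseteq> V" using inV by blast
    then show ?thesis using b unfolding bij_betw_def by (blast intro: inj_on_subset)
  qed
  ultimately show ?thesis using card_image by metis
qed

lemma reach_closed:
  assumes "E\<^sup>*\<^sup>* a w" and "a \<in> S" and "\<And>x y. x \<in> S \<Longrightarrow> E x y \<Longrightarrow> y \<in> S"
  shows "w \<in> S"
  using assms by (induction rule: rtranclp_induct) auto

theorem lemma3p2:
  fixes V :: "'a set" and E :: "'a \<Rightarrow> 'a \<Rightarrow> bool"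
  assumes "simple_graph V E" and "V \<noteq> {}"
    and "vertex_transitive V E" and "bipartite V E"
  shows "IS_imprimitive V E \<longleftrightarrow> \<not> connected_graph V E"
proof -
  note sg = assms(1)
  have finV: "finite V" using sg unfolding simple_graph_def by blast
  have inV: "\<And>x y. E x y \<Longrightarrow> x \<in> V \<and> y \<in> V" using sg unfolding simple_graph_def by blast
  obtain v0 where v0: "v0 \<in> V" using assms(2) by auto
  define d where "d = card {y. E v0 y}"
  have reg: "\<forall>x\<in>V. card {y. E x y} = d" unfolding d_def using regular[OF sg assms(3) _ v0] by blast
  have finnb: "\<And>x. finite {y. E x y}"
    by (rule finite_subset[OF _ finV]) (auto dest: inV)
  obtain X Y where XY: "X \<union> Y = V" "X \<inter> Y = {}" "indep_set V E X" "indep_set V E Y"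
    using assms(4) by (auto simp: bipartite_def)
  define \<alpha> where "\<alpha> = indep_number V E"
  have ale: "\<And>A. indep_set V E A \<Longrightarrow> card A \<le> \<alpha>" using alpha_props(1)[OF finV] \<alpha>_def by auto
  obtain A0 where A0: "indep_set V E A0" "card A0 = \<alpha>" using alpha_props(2)[OF finV] \<alpha>_def by auto
  have finsub: "\<And>S. S \<subseteq> V \<Longrightarrow> finite S" using finV finite_subset by blast
  have nbV: "\<And>A. nbhd E A \<subseteq> V" using inV by (auto simp: nbhd_def)
  have cl: "\<And>A. closed_nbhd E A = nbhd E A \<union> A" by (simp add: closed_nbhd_def)
  show ?thesis
  proof (cases "d = 0")
    case True
    have noE: "\<And>x y. \<not> E x y"
    proof
      fix x y assume "E x y"
      then have "x \<in> V" "{y. E x y} \<noteq> {}" using inV by auto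
      then show False using reg True finnb by auto
    qed
    have "indep_set V E V" using noE by (auto simp: indep_set_def)
    then have "card V \<le> \<alpha>" using ale by auto
    moreover have "\<alpha> \<le> card V" using A0 finV by (metis card_mono indep_set_def)
    ultimately have an: "\<alpha> = card V" by simp
    have nbe: "\<And>A. nbhd E A = {}" using noE by (auto simp: nbhd_def)
    show ?thesis
    proof
      assume "IS_imprimitive V E"
      then obtain A where A: "imprimitive_set V E A" by (auto simp: IS_imprimitive_def)
      then obtain a where a: "a \<in> A" and Asub: "A \<subseteq> V" and lt: "card A < \<alpha>"
        by (auto simp: imprimitive_set_def indep_set_def \<alpha>_def)
      show "\<not> connected_graph V E"
      proof
        assume c: "connected_graph V E"
        have "V \<subseteq> A"
        proof
          fix w assume "w \<in> V"
          then have "E\<^sup>*\<^sup>* a w" using c a Asub by (auto simp: connected_graph_def)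
          then show "w \<in> A" using reach_closed[of E a w A] a noE by blast
        qed
        then have "card V \<le> card A" by (rule card_mono[OF finsub[OF Asub]])
        then show False using lt an by simp
      qed
    next
      assume "\<not> connected_graph V E"
      then obtain u w where uw: "u \<in> V" "w \<in> V" "\<not> E\<^sup>*\<^sup>* u w" by (auto simp: connected_graph_def)
      then have "u \<noteq> w" by auto
      then have "card {u, w} \<le> card V" using uw finV by (intro card_mono) auto
      then have "2 \<le> card V" using \<open>u \<noteq> w\<close> by simp
      then have "imprimitive_set V E {u}"
        using uw noE an nbe unfolding imprimitive_set_def indep_set_def cl \<alpha>_def[symmetric]
        by auto
      then show "IS_imprimitive V E" by (auto simp: IS_imprimitive_def)
    qed
  next
    case False
    have K1: "\<And>A. indep_set V E A \<Longrightarrow> card A \<le> card (nbhd E A)"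
      using key(1)[OF sg reg] False by (auto simp: indep_set_def)
    have K2: "y \<in> A" if "indep_set V E A" "card A = card (nbhd E A)" "t \<in> nbhd E A" "E t y" for A t y
    proof -
      have "A \<subseteq> V" "\<forall>x\<in>A. \<forall>y\<in>A. \<not> E x y" using that(1) unfolding indep_set_def by blast+
      from key(2)[OF sg reg this _ that(3,4)] that(2) show ?thesis by simp
    qed
    have disj: "\<And>A. indep_set V E A \<Longrightarrow> nbhd E A \<inter> A = {}"
      by (auto simp: indep_set_def nbhd_def)
    have ccl: "\<And>A. indep_set V E A \<Longrightarrow> card (closed_nbhd E A) = card (nbhd E A) + card A"
      unfolding cl by (metis card_Un_disjoint disj finsub nbV indep_set_def)
    have NXY1: "nbhd E S \<subseteq> T" if "S \<union> T = V" "indep_set V E S" for S T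
    proof
      fix y assume "y \<in> nbhd E S"
      then obtain x where x: "x \<in> S" "E x y" unfolding nbhd_def by blast
      then have "y \<in> V" using inV by blast
      moreover have "y \<notin> S" using x that(2) unfolding indep_set_def by blast
      ultimately show "y \<in> T" using that(1) by blast
    qed
    have NXY: "nbhd E X \<subseteq> Y" "nbhd E Y \<subseteq> X" using NXY1 XY(1,3,4) by (auto simp: Un_commute)
    have "card X \<le> card Y" using K1[OF XY(3)] NXY(1) card_mono finsub XY(1)
      by (metis le_trans sup_ge2)
    moreover have "card Y \<le> card X" using K1[OF XY(4)] NXY(2) card_mono finsub XY(1)
      by (metis le_trans sup_ge1)
    ultimately have cV: "card V = 2 * card X"
    proof -
      have fX: "finite X" "finite Y" using finsub XY(1) by blast+
      have "card V = card X + card Y" using card_Un_disjoint[OF fX XY(2)] XY(1) by simp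
      then show ?thesis using \<open>card X \<le> card Y\<close> \<open>card Y \<le> card X\<close> by simp
    qed
    have "2 * \<alpha> \<le> card V"
    proof -
      have "card (nbhd E A0 \<union> A0) \<le> card V" using nbV A0(1) finV
        by (intro card_mono) (auto simp: indep_set_def)
      then show ?thesis using ccl[OF A0(1)] K1[OF A0(1)] A0(2) cl by simp
    qed
    moreover have "card X \<le> \<alpha>" using ale XY(3) by simp
    ultimately have a2: "card V = 2 * \<alpha>" using cV by simp
    show ?thesis
    proof
      assume "IS_imprimitive V E"
      then obtain A where A: "imprimitive_set V E A" by (auto simp: IS_imprimitive_def)
      then have iA: "indep_set V E A" and ne: "A \<noteq> {}" and lt: "card A < \<alpha>"
        and r: "real (card A) / real (card (nbhd E A) + card A) = real \<alpha> / real (2 * \<alpha>)"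
        using ccl a2 by (auto simp: imprimitive_set_def \<alpha>_def)
      have Asub: "A \<subseteq> V" using iA by (simp add: indep_set_def)
      have cA: "card A > 0" using ne Asub finsub by (simp add: card_gt_0_iff)
      have "real (card A) / real (card (nbhd E A) + card A) = 1 / 2" using r lt by simp
      then have "2 * real (card A) = real (card (nbhd E A) + card A)" using cA
        by (simp add: field_simps)
      then have eqc: "card A = card (nbhd E A)" by linarith
      obtain a where a: "a \<in> A" using ne by auto
      show "\<not> connected_graph V E"
      proof
        assume c: "connected_graph V E"
        have "V \<subseteq> nbhd E A \<union> A"
        proof
          fix w assume "w \<in> V"
          then have "E\<^sup>*\<^sup>* a w" using c a Asub by (auto simp: connected_graph_def)
          then show "w \<in> nbhd E A \<union> A"
          proof (rule reach_closed)
            show "a \<in> nbhd E A \<union> A" using a by simp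
            fix x y assume xy: "x \<in> nbhd E A \<union> A" "E x y"
            show "y \<in> nbhd E A \<union> A"
            proof (cases "x \<in> A")
              case True
              then have "y \<in> nbhd E A" using xy(2) unfolding nbhd_def by blast
              then show ?thesis by blast
            next
              case False
              then have "x \<in> nbhd E A" using xy(1) by blast
              from K2[OF iA eqc this xy(2)] show ?thesis by blast
            qed
          qed
        qed
        then have "card V \<le> card (nbhd E A \<union> A)" using finsub nbV Asub by (intro card_mono) auto
        then show False using ccl[OF iA] cl eqc a2 lt by simp
      qed
    next
      assume "\<not> connected_graph V E"
      then obtain u w where uw: "u \<in> V" "w \<in> V" "\<not> E\<^sup>*\<^sup>* u w" by (auto simp: connected_graph_def)
      define C where "C = {z. E\<^sup>*\<^sup>* u z}"
      have CV: "C \<subseteq> V"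
      proof
        fix z assume "z \<in> C"
        then have "E\<^sup>*\<^sup>* u z" by (simp add: C_def)
        then show "z \<in> V" using uw(1) by (rule reach_closed) (auto dest: inV)
      qed
      have Ccl: "\<And>x y. x \<in> C \<Longrightarrow> E x y \<Longrightarrow> y \<in> C"
        by (auto simp: C_def intro: rtranclp.rtrancl_into_rtrancl)
      define A where "A = X \<inter> C"
      define B where "B = Y \<inter> C"
      have iA: "indep_set V E A" and iB: "indep_set V E B" using XY(3,4)
        by (auto simp: A_def B_def indep_set_def)
      have NA: "nbhd E A \<subseteq> B" using NXY Ccl by (auto simp: nbhd_def A_def B_def)
      have NB: "nbhd E B \<subseteq> A" using NXY Ccl by (auto simp: nbhd_def A_def B_def)
      have fA: "finite A" "finite B" "finite C" using CV finsub by (auto simp: A_def B_def)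
      have c1: "card (nbhd E A) \<le> card B" using NA fA card_mono by blast
      have c2: "card (nbhd E B) \<le> card A" using NB fA card_mono by blast
      have eqs: "card A = card (nbhd E A)" "card A = card B"
        using K1[OF iA] K1[OF iB] c1 c2 by auto
      have CAB: "C = A \<union> B" "A \<inter> B = {}" using CV XY(1,2) by (auto simp: A_def B_def)
      have cC: "card C = 2 * card A" using CAB fA eqs card_Un_disjoint by (metis mult_2)
      have "u \<in> C" by (simp add: C_def)
      then have "card C > 0" using fA by (auto simp: card_gt_0_iff)
      then have cA: "card A > 0" using cC by simp
      have "C \<subset> V" using CV uw by (auto simp: C_def)
      then have "card C < card V" using finV by (simp add: psubset_card_mono)
      then have lt: "card A < \<alpha>" using cC a2 by simp
      have "imprimitive_set V E A"
        unfolding imprimitive_set_def \<alpha>_def[symmetric]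
      proof (intro conjI)
        show "A \<noteq> {}" using cA by auto
        show "real (card A) / real (card (closed_nbhd E A)) = real \<alpha> / real (card V)"
          using ccl[OF iA] eqs(1) a2 cA lt by (simp add: field_simps)
      qed (use iA lt in auto)
      then show "IS_imprimitive V E" by (auto simp: IS_imprimitive_def)
    qed
  qed
qed

end
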